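(* If $\Phi\in\mathcal F\otimes_{\mathbb C}\mathbb C(t_1,t_2)$ (depending on $q$) is a solution of $q\frac{d}{dq}\Phi=\mathsf M_D\Phi$, then $\Theta\Phi_z$ is a solution of $zq\frac{d}{dq}\Phi=\mathsf M_D\Phi$, where $\Phi_z=\Phi(t_1/z,t_2/z,q)$ and $\Theta|\mu\rangle=z^{\ell(\mu)}|\mu\rangle$.
   Context: $\mathcal F$ is the Fock space generated by commuting creation operators $\alpha_{-k}$ ($k>0$) on a vacuum $v_\emptyset$, with annihilators $\alpha_k$, $\alpha_kv_\emptyset=0$, $[\alpha_k,\alpha_l]=k\delta_{k+l,0}$, and basis $|\mu\rangle=\frac1{\mathfrak z(\mu)}\prod_i\alpha_{-\mu_i}v_\emptyset$ indexed by partitions, $\ell(\mu)$ the length. With $|\cdot|=\sum_{k>0}\alpha_{-k}\alpha_k$, $$\mathsf M_D=\mathsf M_D(q;t_1,t_2)=(t_1+t_2)\sum_{k>0}\frac k2\frac{(-q)^k+1}{(-q)^k-1}\alpha_{-k}\alpha_k-\frac{t_1+t_2}{2}\frac{(-q)+1}{(-q)-1}|\cdot|+\frac12\sum_{k,l>0}\big[t_1t_2\alpha_{k+l}\alpha_{-k}\alpha_{-l}-\alpha_{-k-l}\alpha_k\alpha_l\big].$$ *)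

theory Defs
  imports "HOL-Analysis.Analysis" "HOL-Library.Multiset"
begin

text \<open>Bosonic Fock space realised as the polynomial ring in p_1, p_2, ...:
  alpha_{-k} = multiplication by p_k, alpha_k = k d/dp_k, vacuum = 1.
  A partition mu is a multiset of positive naturals; a vector is given by its
  coefficient function w.r.t. the monomials p_mu = prod_i p_{mu_i}
  (so |mu> = p_mu / z(mu)).  Since all operators involved preserve the grading
  |mu|, we allow arbitrary coefficient functions (graded completion).\<close>

type_synonym fock = "nat multiset \<Rightarrow> complex"

definition acre :: "nat \<Rightarrow> fock \<Rightarrow> fock" where
  "acre k f = (\<lambda>\<mu>. if k \<in># \<mu> then f (\<mu> - {#k#}) else 0)"

definition aann :: "nat \<Rightarrow> fock \<Rightarrow> fock" where
  "aann k f = (\<lambda>\<mu>. of_nat k * of_nat (count \<mu> k + 1) * f (\<mu> + {#k#}))"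

definition energy :: "fock \<Rightarrow> fock" where
  "energy f = (\<lambda>\<mu>. \<Sum>\<^sub>\<infinity>k\<in>{k. k > 0}. acre k (aann k f) \<mu>)"

definition MD :: "complex \<Rightarrow> complex \<Rightarrow> complex \<Rightarrow> fock \<Rightarrow> fock" where
  "MD q t1 t2 f = (\<lambda>\<mu>.
      (t1 + t2) * (\<Sum>\<^sub>\<infinity>k\<in>{k. k > 0}.
          of_nat k / 2 * (((-q)^k + 1) / ((-q)^k - 1)) * acre k (aann k f) \<mu>)
    - (t1 + t2) / 2 * (((-q) + 1) / ((-q) - 1)) * energy f \<mu>
    + 1/2 * (\<Sum>\<^sub>\<infinity>(k,l)\<in>{(k,l). k > 0 \<and> l > 0}.
          t1 * t2 * aann (k + l) (acre k (acre l f)) \<mu>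
          - acre (k + l) (aann k (aann l f)) \<mu>))"

definition Theta :: "complex \<Rightarrow> fock \<Rightarrow> fock" where
  "Theta z f = (\<lambda>\<mu>. z ^ size \<mu> * f \<mu>)"

definition solves :: "complex \<Rightarrow> complex \<Rightarrow> complex \<Rightarrow> complex set \<Rightarrow> (complex \<Rightarrow> fock) \<Rightarrow> bool" where
  "solves c t1 t2 S \<Psi> \<longleftrightarrow> (\<forall>q\<in>S. \<forall>\<mu>. \<exists>d.
      ((\<lambda>w. \<Psi> w \<mu>) has_field_derivative d) (at q) \<and> c * q * d = MD q t1 t2 (\<Psi> q) \<mu>)"

end

theory Submission
  imports Defs
begin

lemma L1: "acre k (aann k (Theta z f)) \<mu> = z ^ size \<mu> * acre k (aann k f) \<mu>"
proof (cases "k \<in># \<mu>")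
  case True
  then obtain \<nu> where "\<mu> = add_mset k \<nu>" by (metis multi_member_split)
  then show ?thesis by (simp add: acre_def aann_def Theta_def)
qed (simp add: acre_def)

lemma L2: "acre (k + l) (aann k (aann l (Theta z f))) \<mu> = z ^ (size \<mu> + 1) * acre (k + l) (aann k (aann l f)) \<mu>"
proof (cases "k + l \<in># \<mu>")
  case True
  then obtain \<nu> where "\<mu> = add_mset (k + l) \<nu>" by (metis multi_member_split)
  then show ?thesis by (simp add: acre_def aann_def Theta_def)
qed (simp add: acre_def)

lemma L3: "z ^ 2 * aann (k + l) (acre k (acre l (Theta z f))) \<mu> = z ^ (size \<mu> + 1) * aann (k + l) (acre k (acre l f)) \<mu>"
proof (cases "k \<in># \<mu> + {#k + l#} \<and> l \<in># \<mu> + {#k + l#} - {#k#}")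
  case True
  then obtain \<nu> where n: "\<mu> + {#k + l#} = add_mset k \<nu>" by (metis multi_member_split)
  with True obtain \<rho> where r: "\<nu> = add_mset l \<rho>" by (metis multi_member_split add_mset_remove_trivial)
  have "size \<mu> + 1 = size \<rho> + 2" using arg_cong[OF n, of size] r by simp
  then show ?thesis using n r
    by (simp add: acre_def aann_def Theta_def power_add power2_eq_square algebra_simps)
qed (auto simp: acre_def aann_def)

lemma energyT: "energy (Theta z f) \<mu> = z ^ size \<mu> * energy f \<mu>"
  unfolding energy_def by (simp add: L1 infsum_cmult_right')

lemma MDT:
  assumes "z \<noteq> 0"
  shows "MD q t1 t2 (Theta z f) \<mu> = z ^ (size \<mu> + 1) * MD q (t1 / z) (t2 / z) f \<mu>"
proof -
  let ?n = "size \<mu>"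
  have A: "(\<Sum>\<^sub>\<infinity>k\<in>{k. k > 0}. of_nat k / 2 * (((-q)^k + 1) / ((-q)^k - 1)) * acre k (aann k (Theta z f)) \<mu>)
     = z ^ ?n * (\<Sum>\<^sub>\<infinity>k\<in>{k. k > 0}. of_nat k / 2 * (((-q)^k + 1) / ((-q)^k - 1)) * acre k (aann k f) \<mu>)"
    by (subst infsum_cmult_right'[symmetric]) (simp add: L1 mult_ac)
  have B3: "aann (k + l) (acre k (acre l (Theta z f))) \<mu> = z ^ (?n + 1) * aann (k + l) (acre k (acre l f)) \<mu> / z^2" for k l
    using L3[of z k l f \<mu>] assms by (simp add: field_simps)
  have B: "(\<Sum>\<^sub>\<infinity>(k,l)\<in>{(k,l). k > 0 \<and> l > 0}.
          t1 * t2 * aann (k + l) (acre k (acre l (Theta z f))) \<mu>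
          - acre (k + l) (aann k (aann l (Theta z f))) \<mu>)
     = z ^ (?n + 1) * (\<Sum>\<^sub>\<infinity>(k,l)\<in>{(k,l). k > 0 \<and> l > 0}.
          t1 / z * (t2 / z) * aann (k + l) (acre k (acre l f)) \<mu>
          - acre (k + l) (aann k (aann l f)) \<mu>)"
  proof (subst infsum_cmult_right'[symmetric], rule infsum_cong)
    fix x :: "nat \<times> nat"
    obtain k l where x: "x = (k, l)" by fastforce
    show "(case x of (k, l) \<Rightarrow> t1 * t2 * aann (k + l) (acre k (acre l (Theta z f))) \<mu>
          - acre (k + l) (aann k (aann l (Theta z f))) \<mu>) =
        z ^ (?n + 1) * (case x of (k, l) \<Rightarrow> t1 / z * (t2 / z) * aann (k + l) (acre k (acre l f)) \<mu>
          - acre (k + l) (aann k (aann l f)) \<mu>)"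
      unfolding x using assms by (simp add: B3 L2 field_simps power2_eq_square)
  qed
  have alg: "\<And>S1 c E S2 :: complex. (t1 + t2) * (z ^ n * S1) - (t1 + t2) / 2 * c * (z ^ n * E) + 1/2 * (z ^ (n+1) * S2)
     = z ^ (n+1) * ((t1/z + t2/z) * S1 - (t1/z + t2/z) / 2 * c * E + 1/2 * S2)" for n
    using assms by (simp add: field_simps)
  show ?thesis unfolding MD_def A B energyT by (rule alg)
qed

theorem proposition1:
  fixes \<Phi> :: "complex \<Rightarrow> complex \<Rightarrow> complex \<Rightarrow> fock"
    and T :: "(complex \<times> complex) set" and S :: "complex set"
    and z t1 t2 :: complex
  assumes "z \<noteq> 0" and "open S"
    and "\<forall>(s1, s2) \<in> T. solves 1 s1 s2 S (\<Phi> s1 s2)"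
    and "(t1 / z, t2 / z) \<in> T"
  shows "solves z t1 t2 S (\<lambda>q. Theta z (\<Phi> (t1 / z) (t2 / z) q))"
proof -
  have s: "solves 1 (t1/z) (t2/z) S (\<Phi> (t1 / z) (t2 / z))" using assms(3,4) by blast
  show ?thesis unfolding solves_def
  proof (intro ballI allI)
    fix q \<mu> assume q: "q \<in> S"
    obtain d where d: "((\<lambda>w. \<Phi> (t1 / z) (t2 / z) w \<mu>) has_field_derivative d) (at q)"
      and e: "1 * q * d = MD q (t1/z) (t2/z) (\<Phi> (t1 / z) (t2 / z) q) \<mu>"
      using s q unfolding solves_def by blast
    have "((\<lambda>w. Theta z (\<Phi> (t1 / z) (t2 / z) w) \<mu>) has_field_derivative z ^ size \<mu> * d) (at q)"
      unfolding Theta_def by (rule DERIV_cmult[OF d])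
    moreover have "z * q * (z ^ size \<mu> * d) = MD q t1 t2 (Theta z (\<Phi> (t1 / z) (t2 / z) q)) \<mu>"
      using e by (simp add: MDT[OF assms(1)] algebra_simps)
    ultimately show "\<exists>d. ((\<lambda>w. Theta z (\<Phi> (t1 / z) (t2 / z) w) \<mu>) has_field_derivative d) (at q) \<and>
       z * q * d = MD q t1 t2 (Theta z (\<Phi> (t1 / z) (t2 / z) q)) \<mu>" by blast
  qed
qed

end
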